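(* Let $\mathrm{X}=(X_n)_{n\ge1}$ be a sequence of random variables in $\mathbb{T}$, each distributed according to Lebesgue measure, and let $\mathrm{r}=(r_n)_{n\ge1}$ be a sequence of reals in $(0,1]$. Let $G$ be a nonempty compact subset of $\mathbb{T}$ and $g$ a gauge function with $\mathcal{H}^g(G)>0$. If $\Theta(\mathrm{X},\mathcal{B}(\mathrm{r}))<\infty$ and $\sum_{n}r_n/g(r_n)=\infty$, then almost surely $\mathcal{E}(\mathrm{X},\mathrm{r})\cap G\neq\emptyset$.
   Context: $\mathbb{T}=\mathbb{R}/\mathbb{Z}$ with quotient distance $d$. $\mathcal{E}(\mathrm{X},\mathrm{r})=\{\xi\in\mathbb{T}: d(\xi,X_n)<r_n\text{ for infinitely many }n\}$. A gauge function is a nondecreasing right-continuous function on $[0,\infty)$ vanishing at zero and only at zero; $\mathcal{H}^g$ is the Hausdorff $g$-measure. For a sequence $\mathrm{B}=(B_n)_{n\ge1}$ of Borel subsets of $\mathbb{T}$ of positive Lebesgue measure, $\theta(\mathrm{X},\mathrm{B})=\sup_{n\ge1}\frac{\mathbb{P}(X_1\in B_1,\dots,X_n\in B_n)}{\mathbb{P}(X_1\in B_1)\cdots\mathbb{P}(X_n\in B_n)}$, and for a collection $\mathcal{B}$ of such sequences, $\Theta(\mathrm{X},\mathcal{B})=\sup_{\mathrm{B}\in\mathcal{B}}\theta(\mathrm{X},\mathrm{B})$. Let $q_n=\lceil 1/r_n\rceil$ and, for $0\le k<q_n$, let $I_{n,k}$ be the image of $[k/q_n,(k+1)/q_n)$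 in $\mathbb{T}$; $\mathcal{B}(\mathrm{r})$ is the collection of all sequences $(I_{n,k_n})_{n\ge1}$ with integers $0\le k_n<q_n$. *)

theory Defs
  imports "HOL-Analysis.Analysis" "HOL-Probability.Probability"
begin

text \<open>The circle T = R/Z is represented by the set of representatives [0,1) of reals.
  The quotient distance between representatives x, y is min (frac (x-y)) (frac (y-x)).\<close>

definition torus :: "real set" where
  "torus = {0..<1}"

definition torus_dist :: "real \<Rightarrow> real \<Rightarrow> real" where
  "torus_dist x y = min (frac (x - y)) (frac (y - x))"

definition torus_top :: "real topology" where
  "torus_top = Metric_space.mtopology torus torus_dist"

definition torus_diam :: "real set \<Rightarrow> real" where
  "torus_diam U = (if U = {} then 0 else Sup {torus_dist x y | x y. x \<in> U \<and> y \<in> U})"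

definition gauge_fun :: "(real \<Rightarrow> real) \<Rightarrow> bool" where
  "gauge_fun g \<longleftrightarrow> mono_on {0..} g \<and> (\<forall>t\<ge>0. continuous (at_right t) g)
     \<and> g 0 = 0 \<and> (\<forall>t>0. g t \<noteq> 0)"

definition hausdorff_pre :: "(real \<Rightarrow> real) \<Rightarrow> real \<Rightarrow> real set \<Rightarrow> ennreal" where
  "hausdorff_pre g \<delta> E = (INF U \<in> {U :: nat \<Rightarrow> real set. E \<subseteq> (\<Union>i. U i) \<and>
        (\<forall>i. U i \<subseteq> torus \<and> torus_diam (U i) \<le> \<delta>)}. (\<Sum>i. ennreal (g (torus_diam (U i)))))"

definition hausdorff_measure :: "(real \<Rightarrow> real) \<Rightarrow> real set \<Rightarrow> ennreal" where
  "hausdorff_measure g E = (SUP \<delta> \<in> {0<..}. hausdorff_pre g \<delta> E)"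

definition Eset :: "(nat \<Rightarrow> real) \<Rightarrow> (nat \<Rightarrow> real) \<Rightarrow> real set" where
  "Eset x r = {\<xi> \<in> torus. \<exists>\<^sub>\<infinity>n. torus_dist \<xi> (x n) < r n}"

definition theta :: "'a measure \<Rightarrow> (nat \<Rightarrow> 'a \<Rightarrow> real) \<Rightarrow> (nat \<Rightarrow> real set) \<Rightarrow> ennreal" where
  "theta M X B = (SUP n. ennreal (measure M {\<omega> \<in> space M. \<forall>j\<le>n. X j \<omega> \<in> B j}
                     / (\<Prod>j\<le>n. measure M {\<omega> \<in> space M. X j \<omega> \<in> B j})))"

definition Theta :: "'a measure \<Rightarrow> (nat \<Rightarrow> 'a \<Rightarrow> real) \<Rightarrow> (nat \<Rightarrow> real set) set \<Rightarrow> ennreal" where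
  "Theta M X \<B> = (SUP B \<in> \<B>. theta M X B)"

definition qn :: "(nat \<Rightarrow> real) \<Rightarrow> nat \<Rightarrow> nat" where
  "qn r n = nat \<lceil>1 / r n\<rceil>"

definition Icell :: "(nat \<Rightarrow> real) \<Rightarrow> nat \<Rightarrow> nat \<Rightarrow> real set" where
  "Icell r n k = {real k / real (qn r n) ..< (real k + 1) / real (qn r n)}"

definition Bcal :: "(nat \<Rightarrow> real) \<Rightarrow> (nat \<Rightarrow> real set) set" where
  "Bcal r = {B. \<exists>k :: nat \<Rightarrow> nat. (\<forall>n. k n < qn r n) \<and> (\<forall>n. B n = Icell r n (k n))}"

end

theory Submission
  imports Defs
begin

lemma frac_neg_eq: "frac (-t) = real_of_int \<lceil>t\<rceil> - t"
  unfolding frac_def floor_minus by simp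

lemma td_le_shift: "torus_dist x y \<le> \<bar>x - y - real_of_int k\<bar>"
proof -
  define t where "t = x - y"
  have "\<lceil>t\<rceil> \<le> \<lfloor>t\<rfloor> + 1" by linarith
  then have "k \<le> \<lfloor>t\<rfloor> \<or> \<lceil>t\<rceil> \<le> k" by linarith
  then show ?thesis
  proof
    assume "k \<le> \<lfloor>t\<rfloor>"
    then have "frac t \<le> \<bar>t - k\<bar>" unfolding frac_def by linarith
    then show ?thesis unfolding torus_dist_def t_def by linarith
  next
    assume "\<lceil>t\<rceil> \<le> k"
    then have "frac (-t) \<le> \<bar>t - k\<bar>" unfolding frac_neg_eq by linarith
    then show ?thesis unfolding torus_dist_def t_def by (simp add: min_le_iff_disj)
  qed
qed

lemma td_attained: "\<exists>k::int. torus_dist x y = \<bar>x - y - real_of_int k\<bar>"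
proof -
  define t where "t = x - y"
  have yx: "y - x = -t" unfolding t_def by simp
  have td: "torus_dist x y = min (frac t) (frac (-t))"
    unfolding torus_dist_def yx t_def ..
  have 1: "frac t = \<bar>t - \<lfloor>t\<rfloor>\<bar>" unfolding frac_def by (simp add: abs_of_nonneg)
  have 2: "frac (-t) = \<bar>t - \<lceil>t\<rceil>\<bar>" unfolding frac_neg_eq by (simp add: abs_of_nonpos)
  have "torus_dist x y = frac t \<or> torus_dist x y = frac (-t)" unfolding td by linarith
  then have "torus_dist x y = \<bar>t - \<lfloor>t\<rfloor>\<bar> \<or> torus_dist x y = \<bar>t - \<lceil>t\<rceil>\<bar>"
    using 1 2 by argo
  then show ?thesis unfolding t_def by blast
qed

lemma td_le_abs: "torus_dist x y \<le> \<bar>x - y\<bar>"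
  using td_le_shift[of x y 0] by simp

lemma td_nonneg: "0 \<le> torus_dist x y"
  unfolding torus_dist_def by simp

lemma td_commute: "torus_dist x y = torus_dist y x"
  unfolding torus_dist_def by (simp add: min.commute)

lemma td_triangle: "torus_dist x z \<le> torus_dist x y + torus_dist y z"
proof -
  obtain k1 where k1: "torus_dist x y = \<bar>x - y - real_of_int k1\<bar>" using td_attained by blast
  obtain k2 where k2: "torus_dist y z = \<bar>y - z - real_of_int k2\<bar>" using td_attained by blast
  have "torus_dist x z \<le> \<bar>x - z - real_of_int (k1 + k2)\<bar>" by (rule td_le_shift)
  also have "\<dots> \<le> torus_dist x y + torus_dist y z" unfolding k1 k2 by simp
  finally show ?thesis .
qed

lemma td_self: "torus_dist x x = 0"
  unfolding torus_dist_def by simp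

lemma td_zero: "x \<in> torus \<Longrightarrow> y \<in> torus \<Longrightarrow> torus_dist x y = 0 \<longleftrightarrow> x = y"
proof
  assume xy: "x \<in> torus" "y \<in> torus" and d: "torus_dist x y = 0"
  obtain k where k: "0 = \<bar>x - y - real_of_int k\<bar>" using td_attained[of x y] d by metis
  then have "x - y = k" by simp
  moreover have "\<bar>x - y\<bar> < 1" using xy unfolding torus_def by auto
  ultimately have "\<bar>k\<bar> < 1" by (metis of_int_abs of_int_less_1_iff)
  then have "k = 0" by simp
  then show "x = y" using \<open>x - y = k\<close> by simp
qed (simp add: td_self)

interpretation TM: Metric_space torus torus_dist
  by unfold_locales (auto simp: td_nonneg td_commute td_zero td_triangle)


lemma gauge_nonneg: "gauge_fun g \<Longrightarrow> 0 \<le> t \<Longrightarrow> 0 \<le> g t"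
  unfolding gauge_fun_def mono_on_def by (metis atLeast_iff order_refl)

lemma gauge_mono: "gauge_fun g \<Longrightarrow> 0 \<le> s \<Longrightarrow> s \<le> t \<Longrightarrow> g s \<le> g t"
  unfolding gauge_fun_def mono_on_def by (meson atLeast_iff order_trans)

lemma gauge_pos: "gauge_fun g \<Longrightarrow> 0 < t \<Longrightarrow> 0 < g t"
  using gauge_nonneg[of g t] unfolding gauge_fun_def by force

lemma td_less1: "torus_dist x y < 1"
  unfolding torus_dist_def using frac_lt_1[of "x-y"] by (simp add: min_less_iff_disj)

lemma diam_nonneg: "0 \<le> torus_diam U"
proof (cases "U = {}")
  case False
  then obtain x where x: "x \<in> U" by blast
  have bdd: "bdd_above {torus_dist x y | x y. x \<in> U \<and> y \<in> U}"
    by (rule bdd_aboveI[of _ 1]) (auto intro: less_imp_le td_less1)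
  have "torus_dist x x \<le> Sup {torus_dist x y | x y. x \<in> U \<and> y \<in> U}"
    by (rule cSup_upper[OF _ bdd]) (use x in blast)
  then show ?thesis using False unfolding torus_diam_def by (simp add: td_self)
qed (simp add: torus_diam_def)

lemma diam_le: 
  assumes "0 \<le> c" "\<And>x y. x \<in> U \<Longrightarrow> y \<in> U \<Longrightarrow> torus_dist x y \<le> c"
  shows "torus_diam U \<le> c"
proof (cases "U = {}")
  case False
  then have ne: "{torus_dist x y | x y. x \<in> U \<and> y \<in> U} \<noteq> {}" by blast
  have "Sup {torus_dist x y | x y. x \<in> U \<and> y \<in> U} \<le> c"
    by (rule cSup_least[OF ne]) (use assms in blast)
  then show ?thesis using False unfolding torus_diam_def by simp
qed (simp add: torus_diam_def assms)

section \<open>Hausdorff pre-measure\<close>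

lemma pre_le_cover:
  assumes "E \<subseteq> (\<Union>i. U i)" "\<And>i. U i \<subseteq> torus" "\<And>i. torus_diam (U i) \<le> \<delta>"
  shows "hausdorff_pre g \<delta> E \<le> (\<Sum>i. ennreal (g (torus_diam (U i))))"
  unfolding hausdorff_pre_def by (rule INF_lower) (use assms in blast)

lemma pre_mono:
  assumes "A \<subseteq> B"
  shows "hausdorff_pre g \<delta> A \<le> hausdorff_pre g \<delta> B"
  unfolding hausdorff_pre_def by (rule INF_superset_mono) (use assms in auto)

lemma pre_empty: 
  assumes "gauge_fun g" "0 \<le> \<delta>"
  shows "hausdorff_pre g \<delta> {} = 0"
proof -
  have "hausdorff_pre g \<delta> {} \<le> (\<Sum>i. ennreal (g (torus_diam ((\<lambda>_. {}) i))))"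
    by (rule pre_le_cover) (auto simp: torus_diam_def assms)
  also have "\<dots> = 0" using assms unfolding torus_diam_def gauge_fun_def by simp
  finally show ?thesis by simp
qed

lemma pre_subadd:
  assumes g: "gauge_fun g"
  shows "hausdorff_pre g \<delta> (\<Union>i. E i) \<le> (\<Sum>i. hausdorff_pre g \<delta> (E i))"
proof (rule ennreal_le_epsilon)
  fix e :: real
  assume fin: "(\<Sum>i. hausdorff_pre g \<delta> (E i)) < top" and e: "0 < e"
  define C where "C = {U :: nat \<Rightarrow> real set. \<forall>i. U i \<subseteq> torus \<and> torus_diam (U i) \<le> \<delta>}"
  define val where "val U = (\<Sum>i. ennreal (g (torus_diam (U i))))" for U :: "nat \<Rightarrow> real set"
  have pre_eq: "hausdorff_pre g \<delta> A = (INF U \<in> {U \<in> C. A \<subseteq> (\<Union>i. U i)}. val U)" for A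
    unfolding hausdorff_pre_def C_def val_def by (rule arg_cong[where f=Inf]) auto
  have "\<exists>U. U \<in> C \<and> E i \<subseteq> (\<Union>j. U j) \<and> val U < hausdorff_pre g \<delta> (E i) + ennreal (e * (1/2)^Suc i)" for i
  proof -
    have "hausdorff_pre g \<delta> (E i) < top"
      using fin ennreal_suminf_lessD by blast
    then obtain a where a: "0 \<le> a" "hausdorff_pre g \<delta> (E i) = ennreal a"
      using less_top_ennreal by blast
    have ep: "0 < e * (1/2)^Suc i" using e by simp
    have "ennreal a < ennreal (a + e * (1/2)^Suc i)" using ep a by (simp add: ennreal_less_iff)
    also have "\<dots> = ennreal a + ennreal (e * (1/2)^Suc i)" using a ep by (simp add: ennreal_plus)
    finally have "hausdorff_pre g \<delta> (E i) < hausdorff_pre g \<delta> (E i) + ennreal (e * (1/2)^Suc i)"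
      using a by simp
    then show ?thesis unfolding pre_eq INF_less_iff by blast
  qed
  then obtain U where U: "\<And>i. U i \<in> C" "\<And>i. E i \<subseteq> (\<Union>j. U i j)"
    "\<And>i. val (U i) < hausdorff_pre g \<delta> (E i) + ennreal (e * (1/2)^Suc i)"
    by metis
  define W where "W k = (case prod_decode k of (i, j) \<Rightarrow> U i j)" for k
  have cov: "(\<Union>i. E i) \<subseteq> (\<Union>k. W k)"
  proof
    fix x assume "x \<in> (\<Union>i. E i)"
    then obtain i j where "x \<in> U i j" using U(2) by blast
    then have "x \<in> W (prod_encode (i, j))" unfolding W_def by simp
    then show "x \<in> (\<Union>k. W k)" by blast
  qed
  have WC: "W k \<subseteq> torus" "torus_diam (W k) \<le> \<delta>" for k
    using U(1) unfolding W_def C_def by (auto split: prod.splits)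
  have "hausdorff_pre g \<delta> (\<Union>i. E i) \<le> (\<Sum>k. ennreal (g (torus_diam (W k))))"
    by (rule pre_le_cover[OF cov WC])
  also have "\<dots> = (\<Sum>k. (\<lambda>(i,j). ennreal (g (torus_diam (U i j)))) (prod_decode k))"
    unfolding W_def by (simp add: case_prod_unfold)
  also have "\<dots> = (\<Sum>i. val (U i))"
    by (rule suminf_ennreal_2dimen) (simp add: val_def)
  also have "\<dots> \<le> (\<Sum>i. hausdorff_pre g \<delta> (E i) + ennreal (e * (1/2)^Suc i))"
    by (rule suminf_le) (use U(3) less_imp_le in auto)
  also have "\<dots> = (\<Sum>i. hausdorff_pre g \<delta> (E i)) + (\<Sum>i. ennreal (e * (1/2)^Suc i))"
    by (rule suminf_add[symmetric]) auto
  also have "(\<Sum>i. ennreal (e * (1/2)^Suc i)) = ennreal e"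
  proof -
    have "(\<lambda>i. e * (1/2)^Suc i) sums (e * 1)" by (intro sums_mult power_half_series)
    then show ?thesis using e by (subst suminf_ennreal2) (auto simp: sums_iff)
  qed
  finally show "hausdorff_pre g \<delta> (\<Union>i. E i) \<le> (\<Sum>i. hausdorff_pre g \<delta> (E i)) + ennreal e" .
qed

section \<open>Cells\<close>

lemma qn_props:
  assumes "0 < r n" "r n \<le> 1"
  shows "1 \<le> qn r n" "1 / real (qn r n) \<le> r n" "real (qn r n) \<le> 2 / r n"
proof -
  have a: "1 \<le> 1 / r n" using assms by (simp add: field_simps)
  have "0 \<le> \<lceil>1 / r n\<rceil>" using a by (simp add: le_ceiling_iff)
  then have q: "real (qn r n) = of_int \<lceil>1 / r n\<rceil>" unfolding qn_def by (rule of_nat_nat)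
  have c1: "1 / r n \<le> of_int \<lceil>1 / r n\<rceil>" by (rule le_of_int_ceiling)
  have c2: "of_int \<lceil>1 / r n\<rceil> < 1 / r n + 1" using ceiling_correct[of "1 / r n"] by simp
  have qq: "1 / r n \<le> real (qn r n)" using c1 q by simp
  then show "1 \<le> qn r n" using a by simp
  have "1 \<le> r n * real (qn r n)"
  proof -
    have "r n * (1 / r n) \<le> r n * real (qn r n)" using qq assms by (intro mult_left_mono) auto
    then show ?thesis using assms by simp
  qed
  moreover have "0 < real (qn r n)" using qq a by linarith
  ultimately show "1 / real (qn r n) \<le> r n" by (simp add: field_simps)
  have "1 / r n + 1 \<le> 2 / r n" using assms by (simp add: field_simps)
  then show "real (qn r n) \<le> 2 / r n" using q c2 by simp
qed

lemma cell_sub: "k < qn r n \<Longrightarrow> Icell r n k \<subseteq> torus"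
proof
  fix x assume k: "k < qn r n" and x: "x \<in> Icell r n k"
  have qp: "0 < real (qn r n)" using k by simp
  have "real k + 1 \<le> real (qn r n)" using k by linarith
  then have "(real k + 1) / real (qn r n) \<le> 1" using qp by (simp add: field_simps)
  moreover have "0 \<le> real k / real (qn r n)" by simp
  moreover have "real k / real (qn r n) \<le> x" "x < (real k + 1) / real (qn r n)" using x unfolding Icell_def by auto
  ultimately have "0 \<le> x" "x < 1" by linarith+
  then show "x \<in> torus" unfolding torus_def by auto
qed

lemma cell_close:
  assumes "x \<in> Icell r n k" "y \<in> Icell r n k" "1 \<le> qn r n"
  shows "\<bar>x - y\<bar> < 1 / real (qn r n)"
proof -
  have e: "(real k + 1) / real (qn r n) = real k / real (qn r n) + 1 / real (qn r n)"
    by (simp add: add_divide_distrib)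
  show ?thesis using assms(1,2) unfolding Icell_def e by auto
qed

lemma cell_disj:
  assumes "k \<noteq> k'" "1 \<le> qn r n"
  shows "Icell r n k \<inter> Icell r n k' = {}"
proof (rule ccontr)
  assume "Icell r n k \<inter> Icell r n k' \<noteq> {}"
  then obtain x where x: "x \<in> Icell r n k" "x \<in> Icell r n k'" by blast
  define q where "q = real (qn r n)"
  have qp: "0 < q" using assms unfolding q_def by simp
  have "real k / q \<le> x" "x < (real k + 1) / q" "real k' / q \<le> x" "x < (real k' + 1) / q"
    using x unfolding Icell_def q_def by auto
  then have "real k / q < (real k' + 1) / q" "real k' / q < (real k + 1) / q" by auto
  then have "real k < real k' + 1" "real k' < real k + 1" using qp by (simp_all add: divide_less_cancel)
  then have "k = k'" by linarith
  then show False using assms by simp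
qed

lemma cell_cover:
  assumes "x \<in> torus" "1 \<le> qn r n"
  shows "\<exists>k < qn r n. x \<in> Icell r n k"
proof -
  define q where "q = real (qn r n)"
  have qp: "0 < q" using assms unfolding q_def by simp
  have x: "0 \<le> x" "x < 1" using assms unfolding torus_def by auto
  define z where "z = \<lfloor>x * q\<rfloor>"
  have z1: "of_int z \<le> x * q" "x * q < of_int z + 1" unfolding z_def using floor_correct[of "x*q"] by auto
  have z0: "0 \<le> z" unfolding z_def using x qp by simp
  define k where "k = nat z"
  have kz: "real k = of_int z" unfolding k_def using z0 by simp
  have "x * q < q" using x qp by simp
  then have "real k < q" using z1 kz by linarith
  then have "k < qn r n" unfolding q_def by simp
  moreover have "real k / q \<le> x" "x < (real k + 1) / q"
    using z1 kz qp by (simp_all add: field_simps)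
  ultimately show ?thesis unfolding Icell_def q_def by auto
qed

lemma cell_measure:
  assumes "1 \<le> qn r n"
  shows "measure lborel (Icell r n k) = 1 / real (qn r n)"
proof -
  have "real k / real (qn r n) \<le> (real k + 1) / real (qn r n)" using assms by (simp add: divide_right_mono)
  moreover have "(real k + 1) / real (qn r n) - real k / real (qn r n) = 1 / real (qn r n)"
    by (simp add: diff_divide_distrib[symmetric])
  ultimately show ?thesis unfolding Icell_def by simp
qed

lemma cell_borel[measurable]: "Icell r n k \<in> sets borel"
  unfolding Icell_def by simp

lemma diverge_unbounded:
  fixes p :: "nat \<Rightarrow> real"
  assumes p0: "\<And>j. 0 \<le> p j" and inf: "(\<Sum>j. ennreal (p j)) = \<infinity>"
  shows "\<exists>m. B < (\<Sum>j<m. p j)"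
proof (rule ccontr)
  assume "\<not> ?thesis"
  then have "\<And>m. (\<Sum>j<m. p j) \<le> B" by (simp add: not_less)
  then have "summable p" by (rule summableI_nonneg_bounded[OF p0])
  then have "(\<Sum>j. ennreal (p j)) = ennreal (\<Sum>j. p j)" using p0 by (simp add: suminf_ennreal2)
  then show False using inf by simp
qed

lemma tail_diverge:
  fixes p :: "nat \<Rightarrow> real"
  assumes p0: "\<And>j. 0 \<le> p j" and p1: "\<And>j. p j \<le> 1" and inf: "(\<Sum>j. ennreal (p j)) = \<infinity>"
  shows "(\<Sum>j. ennreal (if N \<le> j then p j else 0)) = \<infinity>"
proof -
  have "(\<Sum>j. ennreal (p j)) \<le> (\<Sum>j. ennreal (if N \<le> j then p j else 0) + ennreal (if j < N then 1 else 0))"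
    by (rule suminf_le) (use p1 in auto)
  also have "\<dots> = (\<Sum>j. ennreal (if N \<le> j then p j else 0)) + (\<Sum>j. ennreal (if j < N then 1 else 0))"
    by (rule suminf_add[symmetric]) auto
  also have "(\<Sum>j. ennreal (if j < N then 1 else 0)) = (\<Sum>j<N. ennreal (if j < N then 1 else 0))"
    by (rule suminf_finite) auto
  also have "\<dots> = of_nat N" by simp
  finally have "\<infinity> \<le> (\<Sum>j. ennreal (if N \<le> j then p j else 0)) + of_nat N" using inf by simp
  then show ?thesis by (simp add: top_unique ennreal_add_eq_top)
qed

section \<open>Probability setting\<close>

locale setting = prob_space M for M :: "'a measure" +
  fixes X :: "nat \<Rightarrow> 'a \<Rightarrow> real" and r :: "nat \<Rightarrow> real"
  assumes X_meas[measurable]: "\<And>n. X n \<in> borel_measurable M"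
    and X_in: "\<And>n \<omega>. \<omega> \<in> space M \<Longrightarrow> X n \<omega> \<in> torus"
    and X_distr: "\<And>n. distr M lborel (X n) = uniform_measure lborel torus"
    and r_pos: "\<And>n. 0 < r n" and r_le: "\<And>n. r n \<le> 1"
    and Theta_fin: "Theta M X (Bcal r) < \<infinity>"
begin

lemma q1: "1 \<le> qn r n"
  using qn_props(1)[OF r_pos r_le] .

lemma prob_X:
  assumes A: "A \<in> sets borel"
  shows "measure M {\<omega> \<in> space M. X n \<omega> \<in> A} = measure lborel (torus \<inter> A)"
proof -
  have e: "{\<omega> \<in> space M. X n \<omega> \<in> A} = X n -` A \<inter> space M" by auto
  have t1: "emeasure lborel torus = 1" unfolding torus_def by simp
  have "measure M {\<omega> \<in> space M. X n \<omega> \<in> A} = measure (distr M lborel (X n)) A"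
    unfolding e by (rule measure_distr[symmetric]) (use A in auto)
  also have "\<dots> = measure lborel (torus \<inter> A) / measure lborel torus"
    unfolding X_distr by (rule measure_uniform_measure) (use A t1 in auto)
  also have "measure lborel torus = 1" using t1 by (simp add: measure_def)
  finally show ?thesis by simp
qed

lemma prob_cell:
  assumes "k < qn r n"
  shows "measure M {\<omega> \<in> space M. X n \<omega> \<in> Icell r n k} = 1 / real (qn r n)"
proof -
  have "torus \<inter> Icell r n k = Icell r n k" using cell_sub[OF assms] by blast
  then show ?thesis using prob_X[of "Icell r n k" n] cell_measure[OF q1] by simp
qed

lemma cellset_meas[measurable]:
  "{\<omega> \<in> space M. \<forall>j\<le>n. X j \<omega> \<in> C j} \<in> sets M" if "\<And>j. C j \<in> sets borel" for C n
  using that by measurable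

lemma prob_union:
  assumes S: "S \<subseteq> {..<qn r n}"
  shows "measure M {\<omega> \<in> space M. X n \<omega> \<in> (\<Union>k\<in>S. Icell r n k)} = real (card S) / real (qn r n)"
proof -
  have fin: "finite S" using S finite_subset by blast
  have e: "{\<omega> \<in> space M. X n \<omega> \<in> (\<Union>k\<in>S. Icell r n k)} = (\<Union>k\<in>S. {\<omega> \<in> space M. X n \<omega> \<in> Icell r n k})"
    by auto
  have "measure M (\<Union>k\<in>S. {\<omega> \<in> space M. X n \<omega> \<in> Icell r n k}) = (\<Sum>k\<in>S. measure M {\<omega> \<in> space M. X n \<omega> \<in> Icell r n k})"
  proof (rule finite_measure_finite_Union[OF fin])
    show "(\<lambda>k. {\<omega> \<in> space M. X n \<omega> \<in> Icell r n k}) ` S \<subseteq> sets M" by auto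
    show "disjoint_family_on (\<lambda>k. {\<omega> \<in> space M. X n \<omega> \<in> Icell r n k}) S"
      unfolding disjoint_family_on_def using cell_disj[OF _ q1] by blast
  qed
  also have "\<dots> = (\<Sum>k\<in>S. 1 / real (qn r n))"
    by (rule sum.cong) (use S prob_cell in auto)
  finally show ?thesis unfolding e by simp
qed

definition TT where "TT = enn2real (Theta M X (Bcal r))"

lemma Theta_eq: "Theta M X (Bcal r) = ennreal TT"
  unfolding TT_def by (rule ennreal_enn2real[symmetric]) (use Theta_fin in auto)

lemma TT_nonneg: "0 \<le> TT"
  unfolding TT_def by simp

lemma box_bound:
  assumes k: "\<And>j. j \<le> n \<Longrightarrow> k j < qn r j"
  shows "measure M {\<omega> \<in> space M. \<forall>j\<le>n. X j \<omega> \<in> Icell r j (k j)} \<le> TT * (\<Prod>j\<le>n. 1 / real (qn r j))"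
proof -
  define k' where "k' j = (if j \<le> n then k j else 0)" for j
  define B where "B j = Icell r j (k' j)" for j
  have k'q: "k' j < qn r j" for j using k q1[of j] unfolding k'_def by auto
  have B: "B \<in> Bcal r" unfolding Bcal_def B_def using k'q by blast
  define P where "P = (\<Prod>j\<le>n. 1 / real (qn r j))"
  have Pe: "(\<Prod>j\<le>n. measure M {\<omega> \<in> space M. X j \<omega> \<in> B j}) = P"
    unfolding P_def B_def by (rule prod.cong) (use prob_cell k'q in auto)
  have Pp: "0 < P" unfolding P_def using q1 by (intro prod_pos) (use q1 in \<open>simp add: Suc_le_eq\<close>)
  have Ae: "{\<omega> \<in> space M. \<forall>j\<le>n. X j \<omega> \<in> B j} = {\<omega> \<in> space M. \<forall>j\<le>n. X j \<omega> \<in> Icell r j (k j)}"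
    unfolding B_def k'_def by auto
  define A where "A = measure M {\<omega> \<in> space M. \<forall>j\<le>n. X j \<omega> \<in> Icell r j (k j)}"
  have "ennreal (A / P) \<le> theta M X B"
    unfolding theta_def A_def Ae[symmetric] Pe[symmetric] by (rule SUP_upper) simp
  also have "\<dots> \<le> Theta M X (Bcal r)" unfolding Theta_def by (rule SUP_upper[OF B])
  finally have "A / P \<le> TT" unfolding Theta_eq using TT_nonneg by (simp add: ennreal_le_iff)
  then have "A \<le> TT * P" using Pp by (simp add: field_simps)
  then show ?thesis unfolding A_def P_def .
qed

lemma multi_bound:
  assumes S: "\<And>j. S j \<subseteq> {..<qn r j}"
  shows "measure M {\<omega> \<in> space M. \<forall>j\<le>n. X j \<omega> \<in> (\<Union>k\<in>S j. Icell r j k)}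
     \<le> TT * (\<Prod>j\<le>n. real (card (S j)) / real (qn r j))"
proof -
  define K where "K = PiE {..n} S"
  define A where "A k = {\<omega> \<in> space M. \<forall>j\<le>n. X j \<omega> \<in> Icell r j (k j)}" for k
  have finS: "finite (S j)" for j using S finite_subset by blast
  have finK: "finite K" unfolding K_def by (intro finite_PiE) (auto simp: finS)
  have eq: "{\<omega> \<in> space M. \<forall>j\<le>n. X j \<omega> \<in> (\<Union>k\<in>S j. Icell r j k)} = (\<Union>k\<in>K. A k)"
  proof
    show "(\<Union>k\<in>K. A k) \<subseteq> {\<omega> \<in> space M. \<forall>j\<le>n. X j \<omega> \<in> (\<Union>k\<in>S j. Icell r j k)}"
      unfolding K_def A_def by (auto simp: PiE_def Pi_def)
    show "{\<omega> \<in> space M. \<forall>j\<le>n. X j \<omega> \<in> (\<Union>k\<in>S j. Icell r j k)} \<subseteq> (\<Union>k\<in>K. A k)"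
    proof
      fix \<omega> assume w: "\<omega> \<in> {\<omega> \<in> space M. \<forall>j\<le>n. X j \<omega> \<in> (\<Union>k\<in>S j. Icell r j k)}"
      define k where "k j = (if j \<le> n then (SOME k. k \<in> S j \<and> X j \<omega> \<in> Icell r j k) else undefined)" for j
      have "k j \<in> S j \<and> X j \<omega> \<in> Icell r j (k j)" if "j \<le> n" for j
      proof -
        have ex: "\<exists>k. k \<in> S j \<and> X j \<omega> \<in> Icell r j k" using w that by blast
        show ?thesis unfolding k_def using that someI_ex[OF ex] by simp
      qed
      then have "k \<in> K" "\<omega> \<in> A k" unfolding K_def A_def using w by (auto simp: k_def PiE_def Pi_def extensional_def)
      then show "\<omega> \<in> (\<Union>k\<in>K. A k)" by blast
    qed
  qed
  have disj: "disjoint_family_on A K"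
    unfolding disjoint_family_on_def
  proof (intro ballI impI)
    fix k1 k2 assume k: "k1 \<in> K" "k2 \<in> K" "k1 \<noteq> k2"
    have "\<exists>j\<in>{..n}. k1 j \<noteq> k2 j"
      using k PiE_ext[of k1 "{..n}" S k2] unfolding K_def by blast
    then obtain j where j: "j \<le> n" "k1 j \<noteq> k2 j" by auto
    then show "A k1 \<inter> A k2 = {}" unfolding A_def using cell_disj[OF j(2) q1] by blast
  qed
  have "measure M (\<Union>k\<in>K. A k) = (\<Sum>k\<in>K. measure M (A k))"
    by (rule finite_measure_finite_Union[OF finK _ disj]) (auto simp: A_def)
  also have "\<dots> \<le> (\<Sum>k\<in>K. TT * (\<Prod>j\<le>n. 1 / real (qn r j)))"
  proof (rule sum_mono)
    fix k assume "k \<in> K"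
    then have "j \<le> n \<Longrightarrow> k j < qn r j" for j using S unfolding K_def by (auto simp: PiE_def Pi_def)
    then show "measure M (A k) \<le> TT * (\<Prod>j\<le>n. 1 / real (qn r j))"
      unfolding A_def by (rule box_bound)
  qed
  also have "\<dots> = TT * (real (card K) * (\<Prod>j\<le>n. 1 / real (qn r j)))" by simp
  also have "real (card K) = (\<Prod>j\<le>n. real (card (S j)))" unfolding K_def by (simp add: card_PiE)
  also have "(\<Prod>j\<le>n. real (card (S j))) * (\<Prod>j\<le>n. 1 / real (qn r j)) = (\<Prod>j\<le>n. real (card (S j)) / real (qn r j))"
    by (simp add: prod.distrib[symmetric])
  finally show ?thesis unfolding eq .
qed

lemma io_cells:
  assumes S: "\<And>j. S j \<subseteq> {..<qn r j}"
    and inf: "(\<Sum>j. ennreal (real (card (S j)) / real (qn r j))) = \<infinity>"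
  shows "AE \<omega> in M. \<forall>N. \<exists>j\<ge>N. X j \<omega> \<in> (\<Union>k\<in>S j. Icell r j k)"
  unfolding AE_all_countable
proof
  fix N
  define p where "p j = real (card (S j)) / real (qn r j)" for j
  have qp: "0 < real (qn r j)" for j using q1[of j] by simp
  have cS: "card (S j) \<le> qn r j" for j using card_mono[OF _ S[of j]] by simp
  have p0: "0 \<le> p j" for j unfolding p_def by simp
  have p1: "p j \<le> 1" for j unfolding p_def using cS[of j] qp[of j] by (simp add: divide_le_eq_1)
  define p' where "p' j = (if N \<le> j then p j else 0)" for j
  have p'0: "0 \<le> p' j" for j unfolding p'_def using p0 by simp
  have inf': "(\<Sum>j. ennreal (p' j)) = \<infinity>"
    unfolding p'_def by (rule tail_diverge[OF p0 p1]) (use inf in \<open>simp add: p_def\<close>)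
  define S' where "S' j = (if N \<le> j then {..<qn r j} - S j else {..<qn r j})" for j
  define A where "A m = {\<omega> \<in> space M. \<forall>j\<le>m. X j \<omega> \<in> (\<Union>k\<in>S' j. Icell r j k)}" for m
  have Am[measurable]: "A m \<in> sets M" for m unfolding A_def by (rule cellset_meas) auto
  have sub: "{\<omega> \<in> space M. \<not> (\<exists>j\<ge>N. X j \<omega> \<in> (\<Union>k\<in>S j. Icell r j k))} \<subseteq> A m" for m
  proof
    fix \<omega> assume w: "\<omega> \<in> {\<omega> \<in> space M. \<not> (\<exists>j\<ge>N. X j \<omega> \<in> (\<Union>k\<in>S j. Icell r j k))}"
    have "X j \<omega> \<in> (\<Union>k\<in>S' j. Icell r j k)" for j
    proof -
      obtain k where k: "k < qn r j" "X j \<omega> \<in> Icell r j k" using cell_cover[OF X_in q1] w by blast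
      have "k \<in> S' j" using k w unfolding S'_def by auto
      then show ?thesis using k by blast
    qed
    then show "\<omega> \<in> A m" using w unfolding A_def by blast
  qed
  have ratio: "real (card (S' j)) / real (qn r j) = (if N \<le> j then 1 - p j else 1)" for j
  proof (cases "N \<le> j")
    case True
    have "card ({..<qn r j} - S j) = qn r j - card (S j)" using S[of j] by (simp add: card_Diff_subset finite_subset)
    then have "real (card (S' j)) = real (qn r j) - real (card (S j))" using True cS[of j] unfolding S'_def by simp
    then show ?thesis using True qp[of j] unfolding p_def by (simp add: diff_divide_distrib)
  next
    case False
    then show ?thesis unfolding S'_def using qp[of j] by simp
  qed
  have bound: "measure M (A m) \<le> TT * exp (- (\<Sum>j\<le>m. p' j))" for m
  proof -
    have "measure M (A m) \<le> TT * (\<Prod>j\<le>m. real (card (S' j)) / real (qn r j))"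
      unfolding A_def by (rule multi_bound) (auto simp: S'_def)
    also have "(\<Prod>j\<le>m. real (card (S' j)) / real (qn r j)) \<le> (\<Prod>j\<le>m. exp (- p' j))"
    proof (rule prod_mono)
      fix j assume "j \<in> {..m}"
      have "1 + (- p' j) \<le> exp (- p' j)" by (rule exp_ge_add_one_self)
      then show "0 \<le> real (card (S' j)) / real (qn r j) \<and> real (card (S' j)) / real (qn r j) \<le> exp (- p' j)"
        unfolding ratio p'_def using p1[of j] by auto
    qed
    also have "\<dots> = exp (- (\<Sum>j\<le>m. p' j))" by (simp add: exp_sum[symmetric] sum_negf)
    finally show ?thesis using TT_nonneg by (simp add: mult_left_mono)
  qed
  define Z where "Z = (\<Inter>m. A m)"
  have Zs: "Z \<in> sets M" unfolding Z_def by measurable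
  have "measure M Z = 0"
  proof (rule ccontr)
    assume "measure M Z \<noteq> 0"
    then have c: "0 < measure M Z" using measure_nonneg[of M Z] by linarith
    have ZA: "measure M Z \<le> measure M (A m)" for m
      unfolding Z_def by (rule finite_measure_mono) auto
    have TTp: "0 < TT"
    proof (rule ccontr)
      assume "\<not> 0 < TT"
      then have "TT = 0" using TT_nonneg by simp
      then show False using ZA[of 0] bound[of 0] c by simp
    qed
    obtain m where m: "ln (TT / measure M Z) < (\<Sum>j<m. p' j)"
      using diverge_unbounded[OF p'0 inf'] by blast
    have "(\<Sum>j<m. p' j) \<le> (\<Sum>j\<le>m. p' j)"
      by (rule sum_mono2) (auto simp: p'0)
    then have "ln (TT / measure M Z) < (\<Sum>j\<le>m. p' j)" using m by simp
    then have "exp (- (\<Sum>j\<le>m. p' j)) < exp (- ln (TT / measure M Z))" by simp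
    also have "\<dots> = measure M Z / TT" using TTp c by (simp add: ln_div exp_diff)
    finally have "TT * exp (- (\<Sum>j\<le>m. p' j)) < measure M Z" using TTp by (simp add: field_simps)
    then show False using ZA[of m] bound[of m] by simp
  qed
  then have "Z \<in> null_sets M" using Zs by (simp add: null_sets_def emeasure_eq_measure)
  moreover have "{\<omega> \<in> space M. \<not> (\<exists>j\<ge>N. X j \<omega> \<in> (\<Union>k\<in>S j. Icell r j k))} \<subseteq> Z"
    unfolding Z_def using sub by blast
  ultimately show "AE \<omega> in M. \<exists>j\<ge>N. X j \<omega> \<in> (\<Union>k\<in>S j. Icell r j k)"
    by (rule AE_I')
qed

lemma cells_meeting_bound:
  assumes g: "gauge_fun g" and K: "K \<subseteq> torus" and dq: "1 / real (qn r j) \<le> \<delta>"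
  shows "hausdorff_pre g \<delta> K \<le> ennreal (real (card {k. k < qn r j \<and> Icell r j k \<inter> K \<noteq> {}}) * g (1 / real (qn r j)))"
proof -
  define S where "S = {k. k < qn r j \<and> Icell r j k \<inter> K \<noteq> {}}"
  define U where "U i = (if i \<in> S then Icell r j i else {})" for i
  have finS: "finite S" unfolding S_def by simp
  have qp: "0 < real (qn r j)" using q1[of j] by simp
  have cov: "K \<subseteq> (\<Union>i. U i)"
  proof
    fix x assume x: "x \<in> K"
    have xt: "x \<in> torus" using K x by blast
    obtain k where k: "k < qn r j" "x \<in> Icell r j k" using cell_cover[OF xt q1] by blast
    have "x \<in> Icell r j k \<inter> K" using k x by simp
    then have "Icell r j k \<inter> K \<noteq> {}" by (rule ex_in_conv[THEN iffD1, OF exI])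
    then have kS: "k \<in> S" unfolding S_def using k by simp
    have "U k = Icell r j k" unfolding U_def using kS by simp
    then show "x \<in> (\<Union>i. U i)" using k by (intro UN_I[of k]) auto
  qed
  have Ut: "U i \<subseteq> torus" for i unfolding U_def S_def using cell_sub by auto
  have Ud: "torus_diam (U i) \<le> 1 / real (qn r j)" for i
  proof (rule diam_le)
    show "0 \<le> 1 / real (qn r j)" using qp by simp
    fix x y assume "x \<in> U i" "y \<in> U i"
    then have "x \<in> Icell r j i" "y \<in> Icell r j i" unfolding U_def by (auto split: if_splits)
    then have "\<bar>x - y\<bar> < 1 / real (qn r j)" by (rule cell_close[OF _ _ q1])
    then show "torus_dist x y \<le> 1 / real (qn r j)" using td_le_abs[of x y] by linarith
  qed
  have "hausdorff_pre g \<delta> K \<le> (\<Sum>i. ennreal (g (torus_diam (U i))))"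
    by (rule pre_le_cover[OF cov Ut]) (use Ud dq order_trans in blast)
  also have "\<dots> = (\<Sum>i\<in>S. ennreal (g (torus_diam (U i))))"
    by (rule suminf_finite[OF finS]) (use g in \<open>simp add: U_def torus_diam_def gauge_fun_def\<close>)
  also have "\<dots> \<le> (\<Sum>i\<in>S. ennreal (g (1 / real (qn r j))))"
    by (rule sum_mono, rule ennreal_leI, rule gauge_mono[OF g diam_nonneg Ud])
  also have "\<dots> = ennreal (real (card S) * g (1 / real (qn r j)))"
    using gauge_nonneg[OF g, of "1 / real (qn r j)"] qp by (simp add: ennreal_mult ennreal_of_nat_eq_real_of_nat)
  finally show ?thesis unfolding S_def .
qed

lemma io_K:
  assumes g: "gauge_fun g" and \<delta>: "0 < \<delta>" and K: "K \<subseteq> torus" and preK: "0 < hausdorff_pre g \<delta> K"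
    and div: "(\<Sum>n. ennreal (r n / g (r n))) = \<infinity>"
  shows "AE \<omega> in M. \<forall>N. \<exists>n\<ge>N. \<exists>z\<in>K. torus_dist z (X n \<omega>) < r n"
proof -
  define S where "S j = {k. k < qn r j \<and> Icell r j k \<inter> K \<noteq> {}}" for j
  have S: "S j \<subseteq> {..<qn r j}" for j unfolding S_def by auto
  obtain c where c: "0 < c" "ennreal c \<le> hausdorff_pre g \<delta> K"
  proof (cases "hausdorff_pre g \<delta> K = \<infinity>")
    case True then show ?thesis using that[of 1] by simp
  next
    case False
    then show ?thesis using that[of "enn2real (hausdorff_pre g \<delta> K)"] preK
      by (simp add: enn2real_positive_iff less_top ennreal_enn2real)
  qed
  have Kne: "K \<noteq> {}" using preK pre_empty[OF g] \<delta> by auto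
  have gd: "0 < g \<delta>" using gauge_pos[OF g \<delta>] .
  define a where "a = min c (g \<delta>) / 2"
  have a0: "0 < a" unfolding a_def using c gd by simp
  have low: "a * (r j / g (r j)) \<le> real (card (S j)) / real (qn r j)" for j
  proof -
    have qp: "0 < real (qn r j)" using q1[of j] by simp
    have rq: "r j / 2 \<le> 1 / real (qn r j)"
      using qn_props(3)[of r j, OF r_pos r_le] qp r_pos[of j] by (simp add: field_simps)
    have grp: "0 < g (r j)" using gauge_pos[OF g r_pos] .
    show ?thesis
    proof (cases "1 / real (qn r j) \<le> \<delta>")
      case True
      have "ennreal c \<le> ennreal (real (card (S j)) * g (1 / real (qn r j)))"
        using c(2) cells_meeting_bound[OF g K True] unfolding S_def by (rule order_trans)
      then have "c \<le> real (card (S j)) * g (1 / real (qn r j))"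
        using c(1) by (simp add: ennreal_le_iff2)
      also have "\<dots> \<le> real (card (S j)) * g (r j)"
        using gauge_mono[OF g _ qn_props(2)[of r j, OF r_pos r_le]] qp by (intro mult_left_mono) auto
      finally have cS: "c / g (r j) \<le> real (card (S j))" using grp by (simp add: field_simps)
      have "a * (r j / g (r j)) \<le> (c / g (r j)) * (r j / 2)"
        unfolding a_def using grp r_pos[of j] c by (simp add: field_simps min_le_iff_disj)
      also have "\<dots> \<le> real (card (S j)) * (1 / real (qn r j))"
        using cS rq grp c r_pos[of j] by (intro mult_mono) auto
      finally show ?thesis by simp
    next
      case False
      have rd: "\<delta> \<le> r j" using False qn_props(2)[of r j, OF r_pos r_le] by linarith
      have ggd: "g \<delta> \<le> g (r j)" using gauge_mono[OF g _ rd] \<delta> by simp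
      obtain z where z: "z \<in> K" using Kne by blast
      have zt: "z \<in> torus" using K z by blast
      obtain k where k: "k < qn r j" "z \<in> Icell r j k" using cell_cover[OF zt q1] by blast
      have "k \<in> S j" unfolding S_def using k z by blast
      then have "1 \<le> card (S j)" using S[of j] card_0_eq[of "S j"] finite_subset[OF S[of j]]
        by (metis empty_iff finite_lessThan less_one not_le)
      then have "1 / real (qn r j) \<le> real (card (S j)) / real (qn r j)" using qp by (simp add: divide_right_mono)
      moreover have "a * (r j / g (r j)) \<le> r j / 2"
      proof -
        have "a \<le> g (r j) / 2" unfolding a_def using ggd by simp
        then have "a * (r j / g (r j)) \<le> (g (r j) / 2) * (r j / g (r j))"
          using r_pos[of j] grp by (intro mult_right_mono) auto
        then show ?thesis using grp by simp
      qed
      ultimately show ?thesis using rq by linarith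
    qed
  qed
  have inf: "(\<Sum>j. ennreal (real (card (S j)) / real (qn r j))) = \<infinity>"
  proof -
    have "(\<Sum>j. ennreal (a * (r j / g (r j)))) \<le> (\<Sum>j. ennreal (real (card (S j)) / real (qn r j)))"
      by (rule suminf_le) (use low in \<open>auto intro: ennreal_leI\<close>)
    moreover have "(\<Sum>j. ennreal (a * (r j / g (r j)))) = \<infinity>"
    proof -
      have e: "ennreal (a * (r j / g (r j))) = ennreal a * ennreal (r j / g (r j))" for j
        by (rule ennreal_mult') (use a0 in simp)
      have "(\<Sum>j. ennreal (a * (r j / g (r j)))) = (\<Sum>j. ennreal a * ennreal (r j / g (r j)))"
        by (simp only: e)
      also have "\<dots> = ennreal a * \<infinity>" using div by simp
      finally show ?thesis using a0 by (simp add: ennreal_mult_top)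
    qed
    ultimately show ?thesis by (simp add: top_unique)
  qed
  have "AE \<omega> in M. \<forall>N. \<exists>j\<ge>N. X j \<omega> \<in> (\<Union>k\<in>S j. Icell r j k)"
    by (rule io_cells[OF S inf])
  then show ?thesis
  proof (rule AE_mp, intro AE_I2 impI allI)
    fix \<omega> N assume w: "\<omega> \<in> space M" and H: "\<forall>N. \<exists>j\<ge>N. X j \<omega> \<in> (\<Union>k\<in>S j. Icell r j k)"
    then obtain j k where j: "j \<ge> N" "k \<in> S j" "X j \<omega> \<in> Icell r j k" by blast
    then obtain z where z: "z \<in> K" "z \<in> Icell r j k" unfolding S_def by blast
    have "\<bar>z - X j \<omega>\<bar> < 1 / real (qn r j)" by (rule cell_close[OF z(2) j(3) q1])
    then have "torus_dist z (X j \<omega>) < r j"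
      using td_le_abs[of z "X j \<omega>"] qn_props(2)[of r j, OF r_pos r_le] by linarith
    then show "\<exists>n\<ge>N. \<exists>z\<in>K. torus_dist z (X n \<omega>) < r n" using j z by blast
  qed
qed

end

lemma grid_approx:
  assumes y: "y \<in> torus"
  shows "\<exists>j::nat. torus_dist (real j / real (Suc m)) y < 1 / real (Suc m)"
proof -
  define q where "q = real (Suc m)"
  have qp: "0 < q" unfolding q_def by simp
  have yy: "0 \<le> y" using y unfolding torus_def by auto
  define z where "z = \<lfloor>y * q\<rfloor>"
  have z1: "of_int z \<le> y * q" "y * q < of_int z + 1" unfolding z_def using floor_correct[of "y*q"] by auto
  have z0: "0 \<le> z" unfolding z_def using yy qp by simp
  define j where "j = nat z"
  have jz: "real j = of_int z" unfolding j_def using z0 by simp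
  have "real j / q \<le> y" "y < real j / q + 1 / q"
    using z1 jz qp by (simp_all add: field_simps)
  then have "\<bar>real j / q - y\<bar> < 1 / q" by linarith
  then have "torus_dist (real j / q) y < 1 / q" using td_le_abs[of "real j / q" y] by linarith
  then show ?thesis unfolding q_def by blast
qed

locale setting2 = setting +
  fixes g :: "real \<Rightarrow> real" and G :: "real set"
  assumes g: "gauge_fun g" and G_sub: "G \<subseteq> torus" and G_cpt: "compactin torus_top G"
    and HG: "hausdorff_measure g G > 0"
    and div: "(\<Sum>n. ennreal (r n / g (r n))) = \<infinity>"
begin

definition \<delta>0 where "\<delta>0 = (SOME \<delta>. 0 < \<delta> \<and> 0 < hausdorff_pre g \<delta> G)"

lemma \<delta>0: "0 < \<delta>0" "0 < hausdorff_pre g \<delta>0 G"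
proof -
  have "\<exists>\<delta>. 0 < \<delta> \<and> 0 < hausdorff_pre g \<delta> G"
    using HG unfolding hausdorff_measure_def less_SUP_iff by auto
  then show "0 < \<delta>0" "0 < hausdorff_pre g \<delta>0 G" unfolding \<delta>0_def by (metis (mono_tags, lifting) someI_ex)+
qed

abbreviation pre where "pre \<equiv> hausdorff_pre g \<delta>0"

definition ball where "ball y \<rho> = {z \<in> torus. torus_dist y z < \<rho>}"
definition cball where "cball y \<rho> = {z \<in> torus. torus_dist y z \<le> \<rho>}"

definition S where "S = {y \<in> G. \<forall>\<rho>>0. 0 < pre (G \<inter> ball y \<rho>)}"

lemma S_sub: "S \<subseteq> G" unfolding S_def by blast

lemma pre_GS: "pre (G - S) = 0"
proof -
  define c where "c m j = real j / real (Suc m)" for m j :: nat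
  define Nl where "Nl m j = (if pre (G \<inter> ball (c m j) (2 / real (Suc m))) = 0 then G \<inter> ball (c m j) (2 / real (Suc m)) else {})" for m j
  define N where "N i = (case prod_decode i of (m, j) \<Rightarrow> Nl m j)" for i
  have Nz: "pre (N i) = 0" for i
    unfolding N_def Nl_def by (auto split: prod.splits simp: pre_empty[OF g less_imp_le[OF \<delta>0(1)]])
  have cov: "G - S \<subseteq> (\<Union>i. N i)"
  proof
    fix y assume yGS: "y \<in> G - S"
    then have yG: "y \<in> G" and yt: "y \<in> torus" using G_sub by auto
    from yGS obtain \<rho> where \<rho>: "0 < \<rho>" "\<not> 0 < pre (G \<inter> ball y \<rho>)" unfolding S_def by auto
    then have z: "pre (G \<inter> ball y \<rho>) = 0" by (simp add: not_gr_zero)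
    obtain m where m: "inverse (real (Suc m)) < \<rho> / 3" using reals_Archimedean[of "\<rho>/3"] \<rho> by auto
    obtain j where j: "torus_dist (c m j) y < 1 / real (Suc m)" using grid_approx[OF yt, of m] unfolding c_def by blast
    have sub: "ball (c m j) (2 / real (Suc m)) \<subseteq> ball y \<rho>"
    proof
      fix x assume "x \<in> ball (c m j) (2 / real (Suc m))"
      then have x: "x \<in> torus" "torus_dist (c m j) x < 2 / real (Suc m)" unfolding ball_def by auto
      have "torus_dist y x \<le> torus_dist y (c m j) + torus_dist (c m j) x" by (rule td_triangle)
      also have "\<dots> < 1 / real (Suc m) + 2 / real (Suc m)" using j x(2) td_commute[of y "c m j"] by simp
      also have "\<dots> = 3 * inverse (real (Suc m))" by (simp add: field_simps)
      also have "\<dots> < \<rho>" using m by simp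
      finally show "x \<in> ball y \<rho>" using x(1) unfolding ball_def by simp
    qed
    have "pre (G \<inter> ball (c m j) (2 / real (Suc m))) \<le> pre (G \<inter> ball y \<rho>)"
      by (rule pre_mono) (use sub in blast)
    then have z2: "pre (G \<inter> ball (c m j) (2 / real (Suc m))) = 0" using z by simp
    have "1 / real (Suc m) < 2 / real (Suc m)" by (simp add: divide_strict_right_mono)
    then have "y \<in> ball (c m j) (2 / real (Suc m))" unfolding ball_def using yt j by simp
    then have "y \<in> Nl m j" unfolding Nl_def using z2 yG by simp
    then have "y \<in> N (prod_encode (m, j))" unfolding N_def by simp
    then show "y \<in> (\<Union>i. N i)" by (intro UN_I[of "prod_encode (m, j)"]) auto
  qed
  have "pre (G - S) \<le> pre (\<Union>i. N i)" by (rule pre_mono[OF cov])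
  also have "\<dots> \<le> (\<Sum>i. pre (N i))" by (rule pre_subadd[OF g])
  also have "\<dots> = 0" by (simp add: Nz)
  finally show ?thesis by simp
qed

lemma pre_restrict_S:
  assumes "A \<subseteq> G"
  shows "pre A \<le> pre (A \<inter> S)"
proof -
  define E where "E i = (if i = 0 then A \<inter> S else G - S)" for i :: nat
  have "A \<subseteq> (\<Union>i. E i)"
  proof
    fix x assume x: "x \<in> A"
    show "x \<in> (\<Union>i. E i)"
    proof (cases "x \<in> S")
      case True then have "x \<in> E 0" using x unfolding E_def by simp
      then show ?thesis by blast
    next
      case False then have "x \<in> E 1" using x assms unfolding E_def by auto
      then show ?thesis by blast
    qed
  qed
  then have "pre A \<le> pre (\<Union>i. E i)" by (rule pre_mono)
  also have "\<dots> \<le> (\<Sum>i. pre (E i))" by (rule pre_subadd[OF g])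
  also have "\<dots> = (\<Sum>i\<in>{0}. pre (E i))"
    by (rule suminf_finite) (auto simp: E_def pre_GS)
  also have "\<dots> = pre (A \<inter> S)" by (simp add: E_def)
  finally show ?thesis .
qed

definition P where "P m j = S \<inter> cball (real j / real (Suc m)) (1 / real (Suc m))" for m j :: nat

lemma AE_good:
  "AE \<omega> in M. \<forall>mj. 0 < pre (P (fst mj) (snd mj)) \<longrightarrow>
      (\<forall>N. \<exists>n\<ge>N. \<exists>z\<in>P (fst mj) (snd mj). torus_dist z (X n \<omega>) < r n)"
  unfolding AE_all_countable
proof
  fix mj :: "nat \<times> nat"
  show "AE \<omega> in M. 0 < pre (P (fst mj) (snd mj)) \<longrightarrow>
      (\<forall>N. \<exists>n\<ge>N. \<exists>z\<in>P (fst mj) (snd mj). torus_dist z (X n \<omega>) < r n)"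
  proof (cases "0 < pre (P (fst mj) (snd mj))")
    case True
    have Pt: "P (fst mj) (snd mj) \<subseteq> torus" unfolding P_def using S_sub G_sub by auto
    show ?thesis using io_K[OF g \<delta>0(1) Pt True div] by simp
  qed simp
qed

end

context setting2 begin

lemma S_ne: "S \<noteq> {}"
proof
  assume "S = {}"
  then have "pre G \<le> pre {}" using pre_restrict_S[of G] by simp
  then show False using \<delta>0 pre_empty[OF g less_imp_le[OF \<delta>0(1)]] by simp
qed

lemma step:
  assumes good: "\<forall>mj. 0 < pre (P (fst mj) (snd mj)) \<longrightarrow>
      (\<forall>N. \<exists>n\<ge>N. \<exists>z\<in>P (fst mj) (snd mj). torus_dist z (X n \<omega>) < r n)"
    and y: "y \<in> S" and s: "0 < s"
  shows "\<exists>y' s' n'. n < n' \<and> y' \<in> S \<and> 0 < s' \<and> torus_dist y y' + s' \<le> s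
      \<and> torus_dist y' (X n' \<omega>) + s' < r n'"
proof -
  have yt: "y \<in> torus" using y S_sub G_sub by auto
  obtain m where m: "inverse (real (Suc m)) < s / 4" using reals_Archimedean[of "s/4"] s by auto
  define h where "h = 1 / real (Suc m)"
  have hs: "h < s / 4" using m unfolding h_def by (simp add: inverse_eq_divide)
  define c where "c j = real j / real (Suc m)" for j :: nat
  obtain j where j: "torus_dist (c j) y < h" using grid_approx[OF yt, of m] unfolding c_def h_def by blast
  define \<epsilon> where "\<epsilon> = h - torus_dist (c j) y"
  have \<epsilon>: "0 < \<epsilon>" unfolding \<epsilon>_def using j by simp
  have bsub: "ball y \<epsilon> \<subseteq> cball (c j) h"
  proof
    fix z assume "z \<in> ball y \<epsilon>"
    then have z: "z \<in> torus" "torus_dist y z < \<epsilon>" unfolding ball_def by auto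
    have "torus_dist (c j) z \<le> torus_dist (c j) y + torus_dist y z" by (rule td_triangle)
    also have "\<dots> < h" using z(2) unfolding \<epsilon>_def by simp
    finally show "z \<in> cball (c j) h" using z(1) unfolding cball_def by simp
  qed
  have "0 < pre (G \<inter> ball y \<epsilon>)" using y \<epsilon> unfolding S_def by blast
  also have "\<dots> \<le> pre ((G \<inter> ball y \<epsilon>) \<inter> S)" by (rule pre_restrict_S) blast
  also have "\<dots> \<le> pre (P m j)" unfolding P_def c_def h_def
    by (rule pre_mono) (use bsub in \<open>auto simp: c_def h_def\<close>)
  finally have pos: "0 < pre (P m j)" .
  then obtain n' z where n': "Suc n \<le> n'" and zP: "z \<in> P m j" and zX: "torus_dist z (X n' \<omega>) < r n'"
    using good[rule_format, of "(m, j)" "Suc n"] by auto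
  have zS: "z \<in> S" and zc: "torus_dist (c j) z \<le> h" using zP unfolding P_def cball_def c_def h_def by auto
  have "torus_dist y z \<le> torus_dist y (c j) + torus_dist (c j) z" by (rule td_triangle)
  also have "\<dots> < 2 * h" using j zc td_commute[of y "c j"] by simp
  finally have yz: "torus_dist y z < 2 * h" .
  define s' where "s' = min (s / 4) ((r n' - torus_dist z (X n' \<omega>)) / 2)"
  have s'p: "0 < s'" unfolding s'_def using s zX by simp
  have s1: "s' \<le> s / 4" and s2: "s' \<le> (r n' - torus_dist z (X n' \<omega>)) / 2"
    unfolding s'_def by (rule min.cobounded1, rule min.cobounded2)
  have "torus_dist y z + s' \<le> s" using yz hs s1 s by linarith
  moreover have "torus_dist z (X n' \<omega>) + s' < r n'"
  proof -
    define dd where "dd = torus_dist z (X n' \<omega>)"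
    have "dd + (r n' - dd) / 2 < r n'" using zX unfolding dd_def by (simp add: field_simps)
    then show ?thesis using s2 unfolding dd_def by linarith
  qed
  moreover have "n < n'" using n' by simp
  ultimately show ?thesis using zS s'p by blast
qed

lemma good_nonempty:
  assumes good: "\<forall>mj. 0 < pre (P (fst mj) (snd mj)) \<longrightarrow>
      (\<forall>N. \<exists>n\<ge>N. \<exists>z\<in>P (fst mj) (snd mj). torus_dist z (X n \<omega>) < r n)"
  shows "Eset (\<lambda>n. X n \<omega>) r \<inter> G \<noteq> {}"
proof -
  obtain y0 where y0: "y0 \<in> S" using S_ne by blast
  define Pr where "Pr i st = (fst st \<in> S \<and> 0 < fst (snd st))" for i :: nat and st :: "real \<times> real \<times> nat"
  define Q where "Q i st st' = (snd (snd st) < snd (snd st') \<and> torus_dist (fst st) (fst st') + fst (snd st') \<le> fst (snd st)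
      \<and> torus_dist (fst st') (X (snd (snd st')) \<omega>) + fst (snd st') < r (snd (snd st')))"
    for i :: nat and st st' :: "real \<times> real \<times> nat"
  have "\<exists>f. \<forall>i. Pr i (f i) \<and> Q i (f i) (f (Suc i))"
  proof (rule dependent_nat_choice)
    show "\<exists>x. Pr 0 x" using y0 unfolding Pr_def by (intro exI[of _ "(y0, 1, 0)"]) simp
  next
    fix st i assume "Pr i st"
    then obtain y s n where st: "st = (y, s, n)" "y \<in> S" "0 < s" unfolding Pr_def by (cases st) auto
    obtain y' s' n' where "n < n' \<and> y' \<in> S \<and> 0 < s' \<and> torus_dist y y' + s' \<le> s
      \<and> torus_dist y' (X n' \<omega>) + s' < r n'" using step[OF good st(2,3), of n] by blast
    then show "\<exists>st'. Pr (Suc i) st' \<and> Q i st st'"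
      unfolding Pr_def Q_def st by (intro exI[of _ "(y', s', n')"]) simp
  qed
  then obtain f where f: "\<And>i. Pr i (f i)" "\<And>i. Q i (f i) (f (Suc i))" by blast
  define y where "y i = fst (f i)" for i
  define s where "s i = fst (snd (f i))" for i
  define n where "n i = snd (snd (f i))" for i
  have yS: "y i \<in> S" and sp: "0 < s i" for i using f(1)[of i] unfolding Pr_def y_def s_def by auto
  have nm: "n i < n (Suc i)" and ys: "torus_dist (y i) (y (Suc i)) + s (Suc i) \<le> s i"
    and yX: "torus_dist (y (Suc i)) (X (n (Suc i)) \<omega>) + s (Suc i) < r (n (Suc i))" for i
    using f(2)[of i] unfolding Q_def y_def s_def n_def by auto
  have chain: "torus_dist (y i) (y k) + s k \<le> s i" if "i \<le> k" for i k
    using that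
  proof (induction k rule: dec_induct)
    case base then show ?case by (simp add: td_self)
  next
    case (step k)
    have "torus_dist (y i) (y (Suc k)) \<le> torus_dist (y i) (y k) + torus_dist (y k) (y (Suc k))"
      by (rule td_triangle)
    then show ?case using step.IH ys[of k] by linarith
  qed
  have yG: "range y \<subseteq> G" using yS S_sub by blast
  have "compactin TM.mtopology G" using G_cpt unfolding torus_top_def .
  then obtain \<xi> \<phi> where \<xi>: "\<xi> \<in> G" "strict_mono \<phi>" "limitin TM.mtopology (y \<circ> \<phi>) \<xi> sequentially"
    using yG unfolding TM.compactin_sequentially by blast
  have lim: "\<forall>e>0. \<exists>N. \<forall>k\<ge>N. torus_dist (y (\<phi> k)) \<xi> < e"
  proof (intro allI impI)
    fix e :: real assume "0 < e"
    then obtain N where "\<forall>k\<ge>N. y (\<phi> k) \<in> torus \<and> torus_dist (y (\<phi> k)) \<xi> < e"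
      using \<xi>(3) unfolding TM.limit_metric_sequentially comp_def by blast
    then show "\<exists>N. \<forall>k\<ge>N. torus_dist (y (\<phi> k)) \<xi> < e" by blast
  qed
  have xi_close: "torus_dist \<xi> (y i) \<le> s i" for i
  proof (rule field_le_epsilon)
    fix e :: real assume e: "0 < e"
    obtain N where N: "\<forall>k\<ge>N. torus_dist (y (\<phi> k)) \<xi> < e" using lim e by blast
    define k where "k = max N i"
    have "i \<le> k" unfolding k_def by simp
    also have "k \<le> \<phi> k" using seq_suble[OF \<xi>(2)] .
    finally have ik: "i \<le> \<phi> k" .
    have "torus_dist \<xi> (y i) \<le> torus_dist \<xi> (y (\<phi> k)) + torus_dist (y (\<phi> k)) (y i)" by (rule td_triangle)
    also have "torus_dist \<xi> (y (\<phi> k)) < e" using N td_commute unfolding k_def by (metis max.cobounded1)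
    also have "torus_dist (y (\<phi> k)) (y i) \<le> s i"
      using chain[OF ik] td_commute[of "y i" "y (\<phi> k)"] sp[of "\<phi> k"] by linarith
    finally show "torus_dist \<xi> (y i) \<le> s i + e" by simp
  qed
  have hit: "torus_dist \<xi> (X (n (Suc i)) \<omega>) < r (n (Suc i))" for i
  proof -
    have "torus_dist \<xi> (X (n (Suc i)) \<omega>) \<le> torus_dist \<xi> (y (Suc i)) + torus_dist (y (Suc i)) (X (n (Suc i)) \<omega>)"
      by (rule td_triangle)
    then show ?thesis using xi_close[of "Suc i"] yX[of i] by linarith
  qed
  have smn: "strict_mono n" by (rule strict_monoI_Suc) (rule nm)
  have "\<exists>\<^sub>\<infinity>k. torus_dist \<xi> (X k \<omega>) < r k"
    unfolding INFM_nat
  proof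
    fix m
    have "Suc m \<le> n (Suc m)" using seq_suble[OF smn] .
    then show "\<exists>k>m. torus_dist \<xi> (X k \<omega>) < r k" using hit[of m] by (intro exI[of _ "n (Suc m)"]) simp
  qed
  moreover have "\<xi> \<in> torus" using \<xi>(1) G_sub by blast
  ultimately have "\<xi> \<in> Eset (\<lambda>n. X n \<omega>) r" unfolding Eset_def by simp
  then show ?thesis using \<xi>(1) by blast
qed

lemma main: "AE \<omega> in M. Eset (\<lambda>n. X n \<omega>) r \<inter> G \<noteq> {}"
  using AE_good by (rule AE_mp) (intro AE_I2 impI good_nonempty)

end

theorem theorem3p2:
  fixes M :: "'a measure" and X :: "nat \<Rightarrow> 'a \<Rightarrow> real" and r :: "nat \<Rightarrow> real"
    and G :: "real set" and g :: "real \<Rightarrow> real"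
  assumes "prob_space M"
    and X_meas: "\<And>n. X n \<in> borel_measurable M"
    and X_in: "\<And>n \<omega>. \<omega> \<in> space M \<Longrightarrow> X n \<omega> \<in> torus"
    and X_distr: "\<And>n. distr M lborel (X n) = uniform_measure lborel torus"
    and r_pos: "\<And>n. 0 < r n" and r_le: "\<And>n. r n \<le> 1"
    and G_sub: "G \<subseteq> torus" and G_ne: "G \<noteq> {}" and G_cpt: "compactin torus_top G"
    and g: "gauge_fun g" and HG: "hausdorff_measure g G > 0"
    and Theta_fin: "Theta M X (Bcal r) < \<infinity>"
    and div: "(\<Sum>n. ennreal (r n / g (r n))) = \<infinity>"
  shows "AE \<omega> in M. Eset (\<lambda>n. X n \<omega>) r \<inter> G \<noteq> {}"
proof -
  interpret S2: setting2 M X r g G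
    by (intro setting2.intro setting.intro setting_axioms.intro setting2_axioms.intro assms)
  show ?thesis by (rule S2.main)
qed

end
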